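(* Let $\mathcal{D}$ be an abstract system of proof notations and $d\in\mathcal{D}$ with $o(d)\ge2$. Then for all $n\ge1$ and all $s\ge2$, $\vartheta_{\mathsf E^nd}(s)\le 2_{n-1}(2\cdot o(d))\cdot s$, where $\mathsf E^nd$ denotes $\mathsf E\cdots\mathsf Ed$ with $n$ occurrences of $\mathsf E$.
   Context: An abstract system of proof notations is a set $\mathcal{D}$ with functions $|\cdot|,o(\cdot)\colon\mathcal{D}\to\mathbb{N}\setminus\{0\}$ (size and height) and a relation $\to\subseteq\mathcal{D}\times\mathcal{D}$ such that $d\to d'$ implies $o(d')<o(d)$. The cut-elimination closure $\mathbb{E}(\mathcal{D})$ consists of formal terms inductively generated by: every $d\in\mathcal{D}$ (with size and height inherited); if $d,e\in\mathbb{E}(\mathcal{D})$ then $\mathsf{I}d,\ \mathsf{R}de,\ \mathsf{E}d\in\mathbb{E}(\mathcal{D})$ ($\mathsf I,\mathsf R,\mathsf E$ new symbols), with $|\mathsf Id|=|d|+1$, $|\mathsf Rde|=|d|+|e|+1$, $|\mathsf Ed|=|d|+1$, $o(\mathsf Id)=o(d)$, $o(\mathsf Rde)=o(d)+o(e)$, $o(\mathsf Ed)=2^{o(d)}-1$. The size function $\vartheta_d\colon\mathbb{N}\to\mathbb{N}$ for $d\in\mathbb{E}(\mathcal{D})$ is defined by recursion: $\vartheta_d(s)=s$ for $d\in\mathcal{D}$; $\vartheta_{\mathsf Id}(s)=\vartheta_d(s)+1$; $\vartheta_{\mathsf Rde}(s)=\max\{|d|+1+\vartheta_e(s),\ \vartheta_d(s)+1\}$;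 $\vartheta_{\mathsf Ed}(s)=o(d)\cdot(\vartheta_d(s)+2)$. Iterated exponentiation: $2_0(x)=x$, $2_{n+1}(x)=2^{2_n(x)}$. *)

theory Defs
  imports Main
begin

definition abstract_pn_system ::
  "'a set \<Rightarrow> ('a \<Rightarrow> nat) \<Rightarrow> ('a \<Rightarrow> nat) \<Rightarrow> ('a \<Rightarrow> 'a \<Rightarrow> bool) \<Rightarrow> bool" where
  "abstract_pn_system D sz ht red \<longleftrightarrow>
     (\<forall>d\<in>D. sz d \<ge> 1 \<and> ht d \<ge> 1) \<and>
     (\<forall>d e. red d e \<longrightarrow> d \<in> D \<and> e \<in> D \<and> ht e < ht d)"

text \<open>Formal terms of the cut-elimination closure E(D).\<close>
datatype 'a ecl = Base 'a | I "'a ecl" | R "'a ecl" "'a ecl" | E "'a ecl"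

inductive_set ECl :: "'a set \<Rightarrow> 'a ecl set" for D where
  "d \<in> D \<Longrightarrow> Base d \<in> ECl D"
| "d \<in> ECl D \<Longrightarrow> I d \<in> ECl D"
| "d \<in> ECl D \<Longrightarrow> e \<in> ECl D \<Longrightarrow> R d e \<in> ECl D"
| "d \<in> ECl D \<Longrightarrow> E d \<in> ECl D"

fun esize :: "('a \<Rightarrow> nat) \<Rightarrow> 'a ecl \<Rightarrow> nat" where
  "esize sz (Base d) = sz d"
| "esize sz (I d) = esize sz d + 1"
| "esize sz (R d e) = esize sz d + esize sz e + 1"
| "esize sz (E d) = esize sz d + 1"

fun eheight :: "('a \<Rightarrow> nat) \<Rightarrow> 'a ecl \<Rightarrow> nat" where
  "eheight ht (Base d) = ht d"
| "eheight ht (I d) = eheight ht d"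
| "eheight ht (R d e) = eheight ht d + eheight ht e"
| "eheight ht (E d) = 2 ^ eheight ht d - 1"

fun vartheta :: "('a \<Rightarrow> nat) \<Rightarrow> ('a \<Rightarrow> nat) \<Rightarrow> 'a ecl \<Rightarrow> nat \<Rightarrow> nat" where
  "vartheta sz ht (Base d) s = s"
| "vartheta sz ht (I d) s = vartheta sz ht d s + 1"
| "vartheta sz ht (R d e) s = max (esize sz d + 1 + vartheta sz ht e s) (vartheta sz ht d s + 1)"
| "vartheta sz ht (E d) s = eheight ht d * (vartheta sz ht d s + 2)"

fun tower :: "nat \<Rightarrow> nat \<Rightarrow> nat" where
  "tower 0 x = x"
| "tower (Suc n) x = 2 ^ tower n x"

end

theory Submission
  imports Defs
begin

lemma pw: "3 \<le> (x::nat) \<Longrightarrow> 2*x+2 \<le> 2^x"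
proof (induction x rule: dec_induct)
  case base then show ?case by simp
next
  case (step m) then show ?case by simp
qed

lemma base_ineq:
  assumes "(q::nat) \<ge> 2" shows "(2^q - 1) * (2*q+1) \<le> 2^(2*q)"
proof (cases "q = 2")
  case True then show ?thesis by simp
next
  case False
  then have "2*q+1 \<le> 2^q" using pw[of q] assms by simp
  then have "(2^q - 1) * (2*q+1) \<le> 2^q * 2^q"
    by (intro mult_mono) auto
  then show ?thesis by (simp add: power_add[symmetric] mult_2)
qed

lemma step_ineq:
  assumes x3: "(x::nat) \<ge> 3" and h: "h * (x+1) \<le> 2^x"
  shows "(2^h - 1) * (2^x + 1) \<le> (2::nat)^(2^x)"
proof -
  have "2*h \<le> 2^x" using h x3
  proof -
    have "2*h \<le> h*(x+1)" using x3 mult_le_mono2[of 2 "x+1" h] by (simp add: mult.commute)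
    then show ?thesis using h by linarith
  qed
  moreover have "2*x+2 \<le> 2^x" using pw x3 by simp
  moreover have "(2::nat)^x = 2 * 2^(x-1)" using x3
  proof -
    have "x = Suc (x-1)" using x3 by simp
    then show ?thesis by (metis power_Suc)
  qed
  ultimately have hx: "h + x + 1 \<le> 2^x" by linarith
  have "(2^h - 1) * (2^x + 1) \<le> (2::nat)^h * 2^(x+1)"
    by (intro mult_mono) auto
  also have "\<dots> = 2^(h+x+1)" by (simp add: power_add)
  also have "\<dots> \<le> 2^(2^x)" using hx by (intro power_increasing) auto
  finally show ?thesis .
qed

lemma gen:
  assumes o2: "ht d \<ge> 2" and s2: "s \<ge> 2"
  shows "vartheta sz ht ((E ^^ Suc k) (Base d)) s \<le> tower k (2 * ht d) * s
    \<and> eheight ht ((E ^^ Suc k) (Base d)) * (tower k (2 * ht d) + 1) \<le> 2 ^ tower k (2 * ht d)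
    \<and> tower k (2 * ht d) \<ge> 3"
proof (induction k)
  case 0
  have "ht d * (s + 2) \<le> ht d * (2*s)" using s2 by (intro mult_le_mono2) simp
  then have a: "ht d * (s + 2) \<le> 2 * ht d * s" by simp
  show ?case using a base_ineq[OF o2] o2 by (simp add: power_mult)
next
  case (Suc k)
  define x where "x = tower k (2 * ht d)"
  define h where "h = eheight ht ((E ^^ Suc k) (Base d))"
  define t where "t = vartheta sz ht ((E ^^ Suc k) (Base d)) s"
  have IH: "t \<le> x * s" "h * (x+1) \<le> 2^x" "x \<ge> 3" using Suc.IH unfolding x_def h_def t_def by auto
  have "h * (t + 2) \<le> h * (x*s + 2)" using IH by simp
  also have "\<dots> \<le> h * ((x+1)*s)" using s2 by (intro mult_le_mono2) (simp add: algebra_simps)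
  also have "\<dots> = h*(x+1)*s" by (simp add: algebra_simps)
  also have "\<dots> \<le> 2^x * s" using IH by simp
  finally have A: "h * (t + 2) \<le> 2^x * s" .
  have B: "(2^h - 1) * (2^x + 1) \<le> (2::nat)^(2^x)" using step_ineq IH(2,3) by blast
  have C: "(3::nat) \<le> 2^x" using IH
  proof -
    have "2*x+2 \<le> 2^x" using pw IH(3) by blast
    then show ?thesis using IH(3) by linarith
  qed
  show ?case using A B C unfolding x_def h_def t_def by simp
qed

theorem mainTheorem8:
  fixes D :: "'a set" and sz ht :: "'a \<Rightarrow> nat" and red :: "'a \<Rightarrow> 'a \<Rightarrow> bool"
    and d :: 'a and n s :: nat
  assumes "abstract_pn_system D sz ht red"
    and "d \<in> D" and "ht d \<ge> 2"
    and "n \<ge> 1" and "s \<ge> 2"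
  shows "vartheta sz ht ((E ^^ n) (Base d)) s \<le> tower (n - 1) (2 * ht d) * s"
proof -
  obtain k where "n = Suc k" using assms(4) by (cases n) auto
  then show ?thesis using gen[of ht d s, OF assms(3) assms(5)] by simp
qed

end
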